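(* Let $X$ be a uniformly locally finite metric space, $\sigma$ an automorphism of $\mathrm{C}^*_u(X)$, and $f\colon X\to X$ a map such that \[ \inf_{x\in X}\|\sigma(e_{xx})\delta_{f(x)}\|>0. \] Suppose that for every $A\subseteq X$ there is a unitary $u\in\mathrm{C}^*_u(X)$ with $\sigma(p_A)=up_Au^*$. Then $f$ is close to the identity, i.e. $\sup_{x\in X}d(x,f(x))<\infty$.
   Context: Uniformly locally finite: $\sup_x|B_r(x)|<\infty$ for all $r>0$. $(\delta_x)$ canonical basis of $\ell_2(X)$; $e_{xx}$ is the rank-one orthogonal projection onto $\mathbb{C}\delta_x$; $p_A$ is the orthogonal projection onto $\ell_2(A)$. A partial translation is a bijection $f\colon\mathrm{dom}(f)\subseteq X\to\mathrm{ran}(f)\subseteq X$ with $\sup_{x}d(x,f(x))<\infty$; $v_f\delta_x=\delta_{f(x)}$ on $\mathrm{dom}(f)$, $0$ elsewhere; $\mathrm{C}^*_u(X)$ is the $\mathrm{C}^*$-algebra generated by all $v_f$. *)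

theory Defs
  imports "HOL-Analysis.Analysis"
begin

text \<open>The metric space X is the universe of a type 'a of class metric_space.
Operators on l2(X) are represented by their matrices
T x y = <delta_x, T delta_y>.\<close>

definition unif_locally_finite :: "'a::metric_space itself \<Rightarrow> bool" where
  "unif_locally_finite _ \<longleftrightarrow>
     (\<forall>r>0. \<exists>N::nat. \<forall>x::'a. finite (cball x r) \<and> card (cball x r) \<le> N)"

type_synonym 'a mat = "'a \<Rightarrow> 'a \<Rightarrow> complex"

definition l2norm :: "('a \<Rightarrow> complex) \<Rightarrow> real" where
  "l2norm v = sqrt (infsum (\<lambda>x. (cmod (v x))^2) UNIV)"

definition fin_supp :: "('a \<Rightarrow> complex) \<Rightarrow> bool" where
  "fin_supp v \<longleftrightarrow> finite {y. v y \<noteq> 0}"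

definition mvec :: "'a mat \<Rightarrow> ('a \<Rightarrow> complex) \<Rightarrow> ('a \<Rightarrow> complex)" where
  "mvec T v = (\<lambda>x. \<Sum>y\<in>{y. v y \<noteq> 0}. T x y * v y)"

text \<open>A matrix defines a bounded operator on l2(X) iff its action on finitely
supported vectors is l2-valued and bounded.\<close>
definition bounded_op :: "'a mat \<Rightarrow> bool" where
  "bounded_op T \<longleftrightarrow> (\<exists>C. \<forall>v. fin_supp v \<longrightarrow>
      (\<lambda>x. (cmod (mvec T v x))^2) summable_on UNIV \<and> l2norm (mvec T v) \<le> C * l2norm v)"

definition opnorm :: "'a mat \<Rightarrow> real" where
  "opnorm T = Sup {l2norm (mvec T v) | v. fin_supp v \<and> l2norm v \<le> 1}"

definition madd :: "'a mat \<Rightarrow> 'a mat \<Rightarrow> 'a mat" where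
  "madd S T = (\<lambda>x y. S x y + T x y)"

definition msmul :: "complex \<Rightarrow> 'a mat \<Rightarrow> 'a mat" where
  "msmul c T = (\<lambda>x y. c * T x y)"

definition mdiff :: "'a mat \<Rightarrow> 'a mat \<Rightarrow> 'a mat" where
  "mdiff S T = (\<lambda>x y. S x y - T x y)"

definition mmul :: "'a mat \<Rightarrow> 'a mat \<Rightarrow> 'a mat" where
  "mmul S T = (\<lambda>x y. infsum (\<lambda>z. S x z * T z y) UNIV)"

definition madj :: "'a mat \<Rightarrow> 'a mat" where
  "madj T = (\<lambda>x y. cnj (T y x))"

definition mid :: "'a mat" where
  "mid = (\<lambda>x y. if x = y then 1 else 0)"

definition vmat :: "'a set \<Rightarrow> ('a \<Rightarrow> 'a) \<Rightarrow> 'a mat" where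
  "vmat D g = (\<lambda>x y. if y \<in> D \<and> x = g y then 1 else 0)"

definition partial_translation :: "'a::metric_space set \<Rightarrow> ('a \<Rightarrow> 'a) \<Rightarrow> bool" where
  "partial_translation D g \<longleftrightarrow> inj_on g D \<and> (\<exists>C. \<forall>x\<in>D. dist x (g x) \<le> C)"

definition exx :: "'a \<Rightarrow> 'a mat" where
  "exx a = (\<lambda>x y. if x = a \<and> y = a then 1 else 0)"

definition proj :: "'a set \<Rightarrow> 'a mat" where
  "proj A = (\<lambda>x y. if x = y \<and> x \<in> A then 1 else 0)"

inductive_set uroe :: "('a::metric_space) mat set" where
  gen: "partial_translation D g \<Longrightarrow> vmat D g \<in> uroe"
| add: "S \<in> uroe \<Longrightarrow> T \<in> uroe \<Longrightarrow> madd S T \<in> uroe"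
| smul: "T \<in> uroe \<Longrightarrow> msmul c T \<in> uroe"
| mult: "S \<in> uroe \<Longrightarrow> T \<in> uroe \<Longrightarrow> mmul S T \<in> uroe"
| adj: "T \<in> uroe \<Longrightarrow> madj T \<in> uroe"
| lim: "(\<And>n::nat. T n \<in> uroe) \<Longrightarrow> bounded_op S \<Longrightarrow>
        (\<lambda>n. opnorm (mdiff (T n) S)) \<longlonglongrightarrow> 0 \<Longrightarrow> S \<in> uroe"

definition uroe_automorphism :: "('a::metric_space mat \<Rightarrow> 'a mat) \<Rightarrow> bool" where
  "uroe_automorphism \<sigma> \<longleftrightarrow> bij_betw \<sigma> uroe uroe \<and>
     (\<forall>S\<in>uroe. \<forall>T\<in>uroe. \<sigma> (madd S T) = madd (\<sigma> S) (\<sigma> T)) \<and>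
     (\<forall>c. \<forall>T\<in>uroe. \<sigma> (msmul c T) = msmul c (\<sigma> T)) \<and>
     (\<forall>S\<in>uroe. \<forall>T\<in>uroe. \<sigma> (mmul S T) = mmul (\<sigma> S) (\<sigma> T)) \<and>
     (\<forall>T\<in>uroe. \<sigma> (madj T) = madj (\<sigma> T))"

definition unitary :: "'a mat \<Rightarrow> bool" where
  "unitary u \<longleftrightarrow> mmul u (madj u) = mid \<and> mmul (madj u) u = mid"

end

theory Submission
  imports Defs
begin


definition n2 :: "'b set \<Rightarrow> ('b \<Rightarrow> complex) \<Rightarrow> real" where
  "n2 F v = (\<Sum>z\<in>F. (cmod (v z))^2)"

lemma n2_nonneg: "0 \<le> n2 F v"
  unfolding n2_def by (simp add: sum_nonneg)

lemma L2_set_n2: "L2_set (\<lambda>z. cmod (v z)) F = sqrt (n2 F v)"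
  unfolding L2_set_def n2_def by simp

lemma infsum_sum_fin:
  fixes f :: "'b \<Rightarrow> 'c \<Rightarrow> complex"
  assumes "finite X" "\<And>x. x \<in> X \<Longrightarrow> f x summable_on A"
  shows "(\<lambda>z. \<Sum>x\<in>X. f x z) summable_on A \<and> infsum (\<lambda>z. \<Sum>x\<in>X. f x z) A = (\<Sum>x\<in>X. infsum (f x) A)"
  using assms
proof (induction X rule: finite_induct)
  case empty
  then show ?case by simp
next
  case (insert x F)
  have s1: "f x summable_on A" using insert by simp
  have s2: "(\<lambda>z. \<Sum>x\<in>F. f x z) summable_on A" using insert by simp
  have e: "infsum (\<lambda>z. \<Sum>x\<in>F. f x z) A = (\<Sum>x\<in>F. infsum (f x) A)" using insert by simp
  show ?case using insert(1,2) s1 s2 e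
    by (simp add: summable_on_add infsum_add)
qed

lemma nonneg_fin_bound:
  fixes g :: "'b \<Rightarrow> real"
  assumes "\<And>z. 0 \<le> g z" "\<And>F. finite F \<Longrightarrow> sum g F \<le> B"
  shows "g summable_on UNIV \<and> infsum g UNIV \<le> B"
proof -
  have "bdd_above (sum g ` {F. F \<subseteq> UNIV \<and> finite F})"
    using assms(2) by (auto intro!: bdd_aboveI)
  then have s: "g summable_on UNIV"
    using assms(1) by (intro nonneg_bdd_above_summable_on) auto
  then show ?thesis using assms(2) by (auto intro: infsum_le_finite_sums)
qed

lemma CS_fin:
  fixes p q :: "'b \<Rightarrow> complex"
  shows "cmod (\<Sum>z\<in>F. p z * q z) \<le> sqrt (n2 F p) * sqrt (n2 F q)"
proof -
  have "cmod (\<Sum>z\<in>F. p z * q z) \<le> (\<Sum>z\<in>F. cmod (p z * q z))" by (rule norm_sum)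
  also have "\<dots> = (\<Sum>z\<in>F. \<bar>cmod (p z)\<bar> * \<bar>cmod (q z)\<bar>)" by (simp add: norm_mult)
  also have "\<dots> \<le> L2_set (\<lambda>z. cmod (p z)) F * L2_set (\<lambda>z. cmod (q z)) F" by (rule L2_set_mult_ineq)
  finally show ?thesis by (simp add: L2_set_n2)
qed

lemma CS_fin2:
  fixes p q :: "'b \<Rightarrow> complex"
  shows "(cmod (\<Sum>z\<in>F. p z * q z))^2 \<le> n2 F p * n2 F q"
proof -
  have "(cmod (\<Sum>z\<in>F. p z * q z))^2 \<le> (sqrt (n2 F p) * sqrt (n2 F q))^2"
    by (rule power_mono[OF CS_fin]) simp
  also have "\<dots> = n2 F p * n2 F q" using n2_nonneg[of F p] n2_nonneg[of F q]
    by (simp add: power_mult_distrib)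
  finally show ?thesis .
qed

lemma prod_summable:
  fixes a b :: "'b \<Rightarrow> complex"
  assumes "\<And>F. finite F \<Longrightarrow> n2 F a \<le> A" "\<And>F. finite F \<Longrightarrow> n2 F b \<le> B"
  shows "(\<lambda>z. a z * b z) summable_on UNIV \<and> cmod (infsum (\<lambda>z. a z * b z) UNIV) \<le> sqrt A * sqrt B"
proof -
  have A0: "0 \<le> A" using assms(1)[of "{}"] by (simp add: n2_def)
  have B0: "0 \<le> B" using assms(2)[of "{}"] by (simp add: n2_def)
  have fb: "sum (\<lambda>z. norm (a z * b z)) F \<le> sqrt A * sqrt B" if "finite F" for F
  proof -
    have "sum (\<lambda>z. norm (a z * b z)) F = (\<Sum>z\<in>F. \<bar>cmod (a z)\<bar> * \<bar>cmod (b z)\<bar>)" by (simp add: norm_mult)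
    also have "\<dots> \<le> L2_set (\<lambda>z. cmod (a z)) F * L2_set (\<lambda>z. cmod (b z)) F" by (rule L2_set_mult_ineq)
    also have "\<dots> \<le> sqrt A * sqrt B" unfolding L2_set_n2
      using assms that A0 B0 by (intro mult_mono) (auto simp: n2_nonneg)
    finally show ?thesis .
  qed
  have h: "(\<lambda>z. norm (a z * b z)) summable_on UNIV \<and> infsum (\<lambda>z. norm (a z * b z)) UNIV \<le> sqrt A * sqrt B"
    by (rule nonneg_fin_bound) (use fb in auto)
  then have "Infinite_Sum.abs_summable_on (\<lambda>z. a z * b z) UNIV" using h by simp
  then have s: "(\<lambda>z. a z * b z) summable_on UNIV" by (rule abs_summable_summable)
  have "cmod (infsum (\<lambda>z. a z * b z) UNIV) \<le> infsum (\<lambda>z. norm (a z * b z)) UNIV"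
    by (rule norm_infsum_bound) (use h in simp)
  with h s show ?thesis by simp
qed

lemma infsum_of_real_c:
  fixes f :: "'b \<Rightarrow> real"
  shows "infsum (\<lambda>x. complex_of_real (f x)) A = complex_of_real (infsum f A)"
proof (cases "f summable_on A")
  case True
  then show ?thesis by (intro infsumI has_sum_of_real) simp
next
  case False
  have "\<not> (\<lambda>x. complex_of_real (f x)) summable_on A"
  proof
    assume "(\<lambda>x. complex_of_real (f x)) summable_on A"
    then have "(\<lambda>x. Re (complex_of_real (f x))) summable_on A" by (rule summable_on_Re)
    with False show False by simp
  qed
  with False show ?thesis by (simp add: infsum_not_exists)
qed

lemma infsum_single:
  fixes f :: "'b \<Rightarrow> complex"
  assumes "\<And>z. z \<noteq> a \<Longrightarrow> f z = 0"
  shows "infsum f UNIV = f a"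
proof -
  have "infsum f UNIV = infsum f {a}"
    by (rule infsum_cong_neutral) (use assms in auto)
  then show ?thesis by simp
qed

lemma infsum_fin_supp:
  fixes f :: "'b \<Rightarrow> 'c::{comm_monoid_add,t2_space}"
  assumes "finite F" "\<And>z. z \<notin> F \<Longrightarrow> f z = 0"
  shows "infsum f UNIV = sum f F"
proof -
  have "infsum f UNIV = infsum f F"
    by (rule infsum_cong_neutral) (use assms in auto)
  then show ?thesis using assms by simp
qed

lemma cmod_add_sq: "(cmod (a + b))^2 \<le> 2 * (cmod a)^2 + 2 * (cmod b)^2"
proof -
  have "cmod (a + b) \<le> cmod a + cmod b" by (rule norm_triangle_ineq)
  then have "(cmod (a + b))^2 \<le> (cmod a + cmod b)^2" by (rule power_mono) simp
  also have "\<dots> \<le> 2 * (cmod a)^2 + 2 * (cmod b)^2"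
  proof -
    have "0 \<le> (cmod a - cmod b)^2" by simp
    then show ?thesis by (simp add: power2_eq_square algebra_simps)
  qed
  finally show ?thesis .
qed



definition Bnd :: "'b mat \<Rightarrow> real \<Rightarrow> bool" where
  "Bnd T c \<longleftrightarrow> 0 \<le> c \<and> (\<forall>X Y (v::'b \<Rightarrow> complex) w. finite X \<longrightarrow> finite Y \<longrightarrow>
     cmod (\<Sum>x\<in>X. \<Sum>y\<in>Y. w x * T x y * v y) \<le> c * sqrt (n2 X w) * sqrt (n2 Y v))"

definition OpB :: "'b mat \<Rightarrow> real \<Rightarrow> bool" where
  "OpB T c \<longleftrightarrow> 0 \<le> c \<and> (\<forall>X Y (v::'b \<Rightarrow> complex). finite X \<longrightarrow> finite Y \<longrightarrow>
     n2 X (\<lambda>x. \<Sum>y\<in>Y. T x y * v y) \<le> c^2 * n2 Y v)"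

lemma n2_cnj_mult: "(\<Sum>x\<in>X. cnj (b x) * b x) = complex_of_real (n2 X b)"
  unfolding n2_def of_real_sum by (intro sum.cong refl) (metis complex_norm_square mult.commute of_real_power)

lemma n2_cnj[simp]: "n2 X (\<lambda>x. cnj (w x)) = n2 X w"
  unfolding n2_def by simp

lemma BndD: "Bnd T c \<Longrightarrow> finite X \<Longrightarrow> finite Y \<Longrightarrow>
     cmod (\<Sum>x\<in>X. \<Sum>y\<in>Y. w x * T x y * v y) \<le> c * sqrt (n2 X w) * sqrt (n2 Y v)"
  unfolding Bnd_def by blast

lemma OpBD: "OpB T c \<Longrightarrow> finite X \<Longrightarrow> finite Y \<Longrightarrow>
     n2 X (\<lambda>x. \<Sum>y\<in>Y. T x y * v y) \<le> c^2 * n2 Y v"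
  unfolding OpB_def by blast

lemma sum_cmul: "(\<Sum>y\<in>Y. c * T x y * v y) = c * (\<Sum>y\<in>Y. T x y * (v y::complex))"
  by (simp add: sum_distrib_left mult.assoc)

lemma Bnd_OpB: fixes T :: "'b mat" assumes "Bnd T c" shows "OpB T c"
  unfolding OpB_def
proof (intro conjI allI impI)
  show c0: "0 \<le> c" using assms Bnd_def by blast
  fix X Y :: "'b set" and v assume fX: "finite X" and fY: "finite Y"
  define b where "b = (\<lambda>x. \<Sum>y\<in>Y. T x y * v y)"
  define s where "s = n2 X b"
  have "(\<Sum>x\<in>X. \<Sum>y\<in>Y. cnj (b x) * T x y * v y) = (\<Sum>x\<in>X. cnj (b x) * b x)"
    by (intro sum.cong refl) (simp add: sum_cmul b_def)
  also have "\<dots> = complex_of_real s" unfolding s_def by (rule n2_cnj_mult)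
  finally have eq: "(\<Sum>x\<in>X. \<Sum>y\<in>Y. cnj (b x) * T x y * v y) = complex_of_real s" .
  have s0: "0 \<le> s" unfolding s_def by (rule n2_nonneg)
  have nb: "n2 X (\<lambda>x. cnj (b x)) = s" unfolding s_def by (rule n2_cnj)
  have "cmod (\<Sum>x\<in>X. \<Sum>y\<in>Y. cnj (b x) * T x y * v y) \<le> c * sqrt (n2 X (\<lambda>x. cnj (b x))) * sqrt (n2 Y v)"
    by (rule BndD[OF assms fX fY])
  then have "cmod (complex_of_real s) \<le> c * sqrt s * sqrt (n2 Y v)"
    by (simp only: eq nb)
  then have ss: "s \<le> c * sqrt s * sqrt (n2 Y v)"
    using s0 by simp
  have "s \<le> (c * sqrt (n2 Y v))^2"
  proof (cases "s = 0")
    case True then show ?thesis by simp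
  next
    case False
    then have sp: "0 < sqrt s" using s0 by simp
    have "sqrt s * sqrt s \<le> sqrt s * (c * sqrt (n2 Y v))" using ss s0 by (simp add: algebra_simps)
    then have h: "sqrt s \<le> c * sqrt (n2 Y v)" using sp by (rule mult_left_le_imp_le)
    have "s = (sqrt s)^2" using s0 by simp
    also have "\<dots> \<le> (c * sqrt (n2 Y v))^2" by (rule power_mono[OF h]) (simp add: s0)
    finally show ?thesis .
  qed
  also have "\<dots> = c^2 * n2 Y v" using n2_nonneg[of Y v] by (simp add: power_mult_distrib)
  finally show "n2 X (\<lambda>x. \<Sum>y\<in>Y. T x y * v y) \<le> c^2 * n2 Y v" unfolding s_def b_def .
qed

lemma OpB_Bnd: fixes T :: "'b mat" assumes "OpB T c" shows "Bnd T c"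
  unfolding Bnd_def
proof (intro conjI allI impI)
  show c0: "0 \<le> c" using assms OpB_def by blast
  fix X Y :: "'b set" and v w assume fX: "finite X" and fY: "finite Y"
  define b where "b = (\<lambda>x. \<Sum>y\<in>Y. T x y * v y)"
  have eqs: "(\<Sum>x\<in>X. \<Sum>y\<in>Y. w x * T x y * v y) = (\<Sum>x\<in>X. w x * b x)"
    unfolding b_def by (simp add: sum_distrib_left mult.assoc)
  have c1: "cmod (\<Sum>x\<in>X. w x * b x) \<le> sqrt (n2 X w) * sqrt (n2 X b)"
    by (rule CS_fin)
  have nb: "n2 X b \<le> c^2 * n2 Y v" unfolding b_def by (rule OpBD[OF assms fX fY])
  have "sqrt (n2 X b) \<le> sqrt (c^2 * n2 Y v)" using nb by (rule real_sqrt_le_mono)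
  also have "\<dots> = c * sqrt (n2 Y v)" using c0 by (simp add: real_sqrt_mult)
  finally have c2: "sqrt (n2 X b) \<le> c * sqrt (n2 Y v)" .
  have c3: "sqrt (n2 X w) * sqrt (n2 X b) \<le> sqrt (n2 X w) * (c * sqrt (n2 Y v))"
    using c2 by (rule mult_left_mono) (simp add: n2_nonneg)
  show "cmod (\<Sum>x\<in>X. \<Sum>y\<in>Y. w x * T x y * v y) \<le> c * sqrt (n2 X w) * sqrt (n2 Y v)"
    unfolding eqs using c1 c3 by (simp add: algebra_simps)
qed

lemma Bnd_transpose: fixes T :: "'b mat" assumes "Bnd T c" shows "Bnd (\<lambda>x y. T y x) c"
  unfolding Bnd_def
proof (intro conjI allI impI)
  show "0 \<le> c" using assms Bnd_def by blast
  fix X Y :: "'b set" and v w assume fX: "finite X" and fY: "finite Y"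
  have e: "(\<Sum>x\<in>X. \<Sum>y\<in>Y. w x * T y x * v y) = (\<Sum>y\<in>Y. \<Sum>x\<in>X. v y * T y x * w x)"
    by (subst sum.swap) (simp add: mult.commute mult.left_commute)
  have "cmod (\<Sum>y\<in>Y. \<Sum>x\<in>X. v y * T y x * w x) \<le> c * sqrt (n2 Y v) * sqrt (n2 X w)"
    by (rule BndD[OF assms fY fX])
  then show "cmod (\<Sum>x\<in>X. \<Sum>y\<in>Y. w x * T y x * v y) \<le> c * sqrt (n2 X w) * sqrt (n2 Y v)"
    unfolding e by (simp only: mult_ac)
qed

lemma Bnd_adj: fixes T :: "'b mat" assumes "Bnd T c" shows "Bnd (madj T) c"
  unfolding Bnd_def
proof (intro conjI allI impI)
  show "0 \<le> c" using assms Bnd_def by blast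
  fix X Y :: "'b set" and v w assume fX: "finite X" and fY: "finite Y"
  have e: "(\<Sum>x\<in>X. \<Sum>y\<in>Y. w x * madj T x y * v y) = cnj (\<Sum>y\<in>Y. \<Sum>x\<in>X. cnj (v y) * T y x * cnj (w x))"
    unfolding madj_def by (subst sum.swap) (simp add: mult.commute mult.left_commute)
  have "cmod (\<Sum>y\<in>Y. \<Sum>x\<in>X. cnj (v y) * T y x * cnj (w x)) \<le> c * sqrt (n2 Y (\<lambda>y. cnj (v y))) * sqrt (n2 X (\<lambda>x. cnj (w x)))"
    by (rule BndD[OF assms fY fX])
  then show "cmod (\<Sum>x\<in>X. \<Sum>y\<in>Y. w x * madj T x y * v y) \<le> c * sqrt (n2 X w) * sqrt (n2 Y v)"
    unfolding e complex_mod_cnj n2_cnj by (simp only: mult_ac)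
qed

lemma Bnd_col: fixes T :: "'b mat" assumes "Bnd T c" "finite X" shows "n2 X (\<lambda>x. T x y) \<le> c^2"
proof -
  have "n2 X (\<lambda>x. \<Sum>y'\<in>{y}. T x y' * 1) \<le> c^2 * n2 {y} (\<lambda>_. 1)"
    by (rule OpBD[OF Bnd_OpB[OF assms(1)] assms(2)]) simp
  then show ?thesis by (simp add: n2_def)
qed

lemma Bnd_row: fixes T :: "'b mat" assumes "Bnd T c" "finite Y" shows "n2 Y (T x) \<le> c^2"
  using Bnd_col[OF Bnd_transpose[OF assms(1)] assms(2), of x] by simp

lemma Bnd_left: fixes T :: "'b mat" assumes "Bnd T c" "finite X" "finite Z"
  shows "n2 Z (\<lambda>z. \<Sum>x\<in>X. w x * T x z) \<le> c^2 * n2 X w"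
  using OpBD[OF Bnd_OpB[OF Bnd_transpose[OF assms(1)]] assms(3,2), of w]
  by (simp add: mult.commute)



definition RowT :: "('b::metric_space) mat \<Rightarrow> bool" where
  "RowT T \<longleftrightarrow> (\<forall>\<eta>>0. \<exists>r. \<forall>x Y. finite Y \<longrightarrow> (\<forall>y\<in>Y. r < dist x y) \<longrightarrow> n2 Y (T x) \<le> \<eta>)"

definition Good :: "('b::metric_space) mat \<Rightarrow> bool" where
  "Good T \<longleftrightarrow> (\<exists>c. Bnd T c) \<and> RowT T \<and> RowT (madj T)"

lemma RowTI:
  assumes "\<And>\<eta>. \<eta> > 0 \<Longrightarrow> \<exists>r. \<forall>x Y. finite Y \<longrightarrow> (\<forall>y\<in>Y. r < dist x y) \<longrightarrow> n2 Y (T x) \<le> \<eta>"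
  shows "RowT T"
  using assms unfolding RowT_def by blast

lemma RowTD:
  assumes "RowT T" "\<eta> > 0"
  obtains r where "\<And>x Y. finite Y \<Longrightarrow> (\<forall>y\<in>Y. r < dist x y) \<Longrightarrow> n2 Y (T x) \<le> \<eta>"
  using assms unfolding RowT_def by meson

lemma prop_RowT:
  assumes "\<And>x y. T x y \<noteq> 0 \<Longrightarrow> dist x y \<le> C"
  shows "RowT T"
proof (rule RowTI)
  fix \<eta> :: real assume "\<eta> > 0"
  show "\<exists>r. \<forall>x Y. finite Y \<longrightarrow> (\<forall>y\<in>Y. r < dist x y) \<longrightarrow> n2 Y (T x) \<le> \<eta>"
  proof (intro exI allI impI)
    fix x :: 'a and Y assume "finite Y" "\<forall>y\<in>Y. C < dist x y"
    then have "\<forall>y\<in>Y. T x y = 0" using assms by force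
    then show "n2 Y (T x) \<le> \<eta>" using \<open>\<eta> > 0\<close> by (simp add: n2_def)
  qed
qed

lemma n2_add_le: "n2 Y (\<lambda>y. a y + b y) \<le> 2 * n2 Y a + 2 * n2 Y b"
  unfolding n2_def by (simp add: sum_distrib_left sum.distrib[symmetric] sum_mono cmod_add_sq)

lemma RowT_add:
  assumes "RowT S" "RowT T" shows "RowT (madd S T)"
proof (rule RowTI)
  fix \<eta> :: real assume e: "\<eta> > 0"
  obtain r1 where r1: "\<And>x Y. finite Y \<Longrightarrow> (\<forall>y\<in>Y. r1 < dist x y) \<Longrightarrow> n2 Y (S x) \<le> \<eta>/4"
    using RowTD[OF assms(1), of "\<eta>/4"] e by auto
  obtain r2 where r2: "\<And>x Y. finite Y \<Longrightarrow> (\<forall>y\<in>Y. r2 < dist x y) \<Longrightarrow> n2 Y (T x) \<le> \<eta>/4"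
    using RowTD[OF assms(2), of "\<eta>/4"] e by auto
  show "\<exists>r. \<forall>x Y. finite Y \<longrightarrow> (\<forall>y\<in>Y. r < dist x y) \<longrightarrow> n2 Y (madd S T x) \<le> \<eta>"
  proof (intro exI allI impI)
    fix x :: 'a and Y assume f: "finite Y" and d: "\<forall>y\<in>Y. max r1 r2 < dist x y"
    have "n2 Y (madd S T x) \<le> 2 * n2 Y (S x) + 2 * n2 Y (T x)"
      unfolding madd_def by (rule n2_add_le)
    also have "\<dots> \<le> 2 * (\<eta>/4) + 2 * (\<eta>/4)"
      using r1[OF f] r2[OF f] d by (intro add_mono mult_left_mono) auto
    finally show "n2 Y (madd S T x) \<le> \<eta>" by simp
  qed
qed

lemma n2_smul: "n2 Y (\<lambda>y. c * a y) = (cmod c)^2 * n2 Y a"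
  unfolding n2_def by (simp add: sum_distrib_left norm_mult power_mult_distrib)

lemma RowT_smul:
  assumes "RowT T" shows "RowT (msmul c T)"
proof (rule RowTI)
  fix \<eta> :: real assume e: "\<eta> > 0"
  define k where "k = (cmod c)^2 + 1"
  have k: "k > 0" unfolding k_def by (simp add: add_nonneg_pos)
  obtain r where r: "\<And>x Y. finite Y \<Longrightarrow> (\<forall>y\<in>Y. r < dist x y) \<Longrightarrow> n2 Y (T x) \<le> \<eta>/k"
    using RowTD[OF assms(1), of "\<eta>/k"] e k by auto
  show "\<exists>r. \<forall>x Y. finite Y \<longrightarrow> (\<forall>y\<in>Y. r < dist x y) \<longrightarrow> n2 Y (msmul c T x) \<le> \<eta>"
  proof (intro exI allI impI)
    fix x :: 'a and Y assume f: "finite Y" and d: "\<forall>y\<in>Y. r < dist x y"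
    have "n2 Y (msmul c T x) = (cmod c)^2 * n2 Y (T x)"
      unfolding msmul_def by (rule n2_smul)
    also have "\<dots> \<le> k * (\<eta>/k)"
      using r[OF f d] n2_nonneg[of Y "T x"] unfolding k_def
      by (intro mult_mono) auto
    finally show "n2 Y (msmul c T x) \<le> \<eta>" using k by simp
  qed
qed

lemma madj_madj[simp]: "madj (madj T) = T"
  unfolding madj_def by simp

lemma madj_madd: "madj (madd S T) = madd (madj S) (madj T)"
  unfolding madj_def madd_def by simp

lemma madj_msmul: "madj (msmul c T) = msmul (cnj c) (madj T)"
  unfolding madj_def msmul_def by simp

lemma Bnd_add: assumes "Bnd S a" "Bnd T b" shows "Bnd (madd S T) (a + b)"
  unfolding Bnd_def
proof (intro conjI allI impI)
  show "0 \<le> a + b" using assms unfolding Bnd_def by auto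
  fix X Y :: "'a set" and v w assume fX: "finite X" and fY: "finite Y"
  have e: "(\<Sum>x\<in>X. \<Sum>y\<in>Y. w x * madd S T x y * v y) =
     (\<Sum>x\<in>X. \<Sum>y\<in>Y. w x * S x y * v y) + (\<Sum>x\<in>X. \<Sum>y\<in>Y. w x * T x y * v y)"
    unfolding madd_def by (simp add: algebra_simps sum.distrib)
  have "cmod (\<Sum>x\<in>X. \<Sum>y\<in>Y. w x * madd S T x y * v y) \<le>
     cmod (\<Sum>x\<in>X. \<Sum>y\<in>Y. w x * S x y * v y) + cmod (\<Sum>x\<in>X. \<Sum>y\<in>Y. w x * T x y * v y)"
    unfolding e by (rule norm_triangle_ineq)
  also have "\<dots> \<le> a * sqrt (n2 X w) * sqrt (n2 Y v) + b * sqrt (n2 X w) * sqrt (n2 Y v)"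
    by (rule add_mono[OF BndD[OF assms(1) fX fY] BndD[OF assms(2) fX fY]])
  finally show "cmod (\<Sum>x\<in>X. \<Sum>y\<in>Y. w x * madd S T x y * v y) \<le> (a + b) * sqrt (n2 X w) * sqrt (n2 Y v)"
    by (simp add: algebra_simps)
qed

lemma Bnd_smul: assumes "Bnd T b" shows "Bnd (msmul c T) (cmod c * b)"
  unfolding Bnd_def
proof (intro conjI allI impI)
  show "0 \<le> cmod c * b" using assms unfolding Bnd_def by auto
  fix X Y :: "'a set" and v w assume fX: "finite X" and fY: "finite Y"
  have e: "(\<Sum>x\<in>X. \<Sum>y\<in>Y. w x * msmul c T x y * v y) = c * (\<Sum>x\<in>X. \<Sum>y\<in>Y. w x * T x y * v y)"
    unfolding msmul_def by (simp add: algebra_simps sum_distrib_left)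
  have "cmod (\<Sum>x\<in>X. \<Sum>y\<in>Y. w x * msmul c T x y * v y) = cmod c * cmod (\<Sum>x\<in>X. \<Sum>y\<in>Y. w x * T x y * v y)"
    unfolding e by (simp add: norm_mult)
  also have "\<dots> \<le> cmod c * (b * sqrt (n2 X w) * sqrt (n2 Y v))"
    by (rule mult_left_mono[OF BndD[OF assms fX fY]]) simp
  finally show "cmod (\<Sum>x\<in>X. \<Sum>y\<in>Y. w x * msmul c T x y * v y) \<le> cmod c * b * sqrt (n2 X w) * sqrt (n2 Y v)"
    by (simp add: algebra_simps)
qed

lemma Good_add: "Good S \<Longrightarrow> Good T \<Longrightarrow> Good (madd S T)"
  unfolding Good_def madj_madd using Bnd_add RowT_add by blast

lemma Good_smul: "Good T \<Longrightarrow> Good (msmul c T)"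
  unfolding Good_def madj_msmul using Bnd_smul RowT_smul by blast

lemma Good_adj: "Good T \<Longrightarrow> Good (madj T)"
  unfolding Good_def using Bnd_adj by auto

lemma Bnd_vmat:
  assumes inj: "inj_on g D"
  shows "Bnd (vmat D g) 1"
proof (rule OpB_Bnd, unfold OpB_def, intro conjI allI impI)
  fix X Y :: "'a set" and v assume fX: "finite X" and fY: "finite Y"
  have one: "(cmod (\<Sum>y\<in>Y. vmat D g x y * v y))^2 \<le> (\<Sum>y\<in>Y. (if y \<in> D \<and> x = g y then 1 else 0) * (cmod (v y))^2)" for x
  proof -
    define Z where "Z = {y\<in>Y. y \<in> D \<and> x = g y}"
    have e1: "(\<Sum>y\<in>Y. vmat D g x y * v y) = (\<Sum>y\<in>Z. v y)"
      unfolding Z_def using fY by (auto simp: sum.inter_filter vmat_def intro!: sum.cong)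
    have e2: "(\<Sum>y\<in>Y. (if y \<in> D \<and> x = g y then 1 else 0) * (cmod (v y))^2) = (\<Sum>y\<in>Z. (cmod (v y))^2)"
      unfolding Z_def using fY by (auto simp: sum.inter_filter intro!: sum.cong)
    have "Z = {} \<or> (\<exists>y0. Z = {y0})"
      using inj unfolding inj_on_def Z_def by blast
    then show ?thesis unfolding e1 e2 by (elim disjE exE) auto
  qed
  have "n2 X (\<lambda>x. \<Sum>y\<in>Y. vmat D g x y * v y) \<le> (\<Sum>x\<in>X. \<Sum>y\<in>Y. (if y \<in> D \<and> x = g y then 1 else 0) * (cmod (v y))^2)"
    unfolding n2_def by (rule sum_mono) (rule one)
  also have "\<dots> = (\<Sum>y\<in>Y. (\<Sum>x\<in>X. if y \<in> D \<and> x = g y then 1 else 0) * (cmod (v y))^2)"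
    by (subst sum.swap) (simp add: sum_distrib_right)
  also have "\<dots> \<le> (\<Sum>y\<in>Y. 1 * (cmod (v y))^2)"
  proof (rule sum_mono, rule mult_right_mono)
    fix y show "(\<Sum>x\<in>X. if y \<in> D \<and> x = g y then 1 else 0) \<le> (1::real)"
      using fX by (cases "y \<in> D") (auto simp: sum.delta')
  qed simp
  finally show "n2 X (\<lambda>x. \<Sum>y\<in>Y. vmat D g x y * v y) \<le> 1^2 * n2 Y v" by (simp add: n2_def)
qed simp

lemma Good_vmat:
  assumes "partial_translation D g" shows "Good (vmat D g)"
proof -
  obtain C where inj: "inj_on g D" and C: "\<forall>x\<in>D. dist x (g x) \<le> C"
    using assms unfolding partial_translation_def by blast
  have p: "dist x y \<le> C" if "vmat D g x y \<noteq> 0" for x y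
    using that C unfolding vmat_def by (auto split: if_splits simp: dist_commute)
  have p2: "dist x y \<le> C" if "madj (vmat D g) x y \<noteq> 0" for x y
    using that C unfolding vmat_def madj_def by (auto split: if_splits simp: dist_commute)
  show ?thesis unfolding Good_def using Bnd_vmat[OF inj] prop_RowT[OF p] prop_RowT[OF p2] by blast
qed



lemma sqrt_bound_aux:
  fixes s K :: real
  assumes "0 \<le> s" "0 \<le> K" "s \<le> K * sqrt s"
  shows "s \<le> K^2"
proof (cases "s = 0")
  case True then show ?thesis by simp
next
  case False
  then have sp: "0 < sqrt s" using assms(1) by simp
  have "sqrt s * sqrt s \<le> sqrt s * K" using assms by (simp add: algebra_simps)
  then have h: "sqrt s \<le> K" using sp by (rule mult_left_le_imp_le)
  have "s = (sqrt s)^2" using assms(1) by simp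
  also have "\<dots> \<le> K^2" by (rule power_mono[OF h]) (simp add: assms(1))
  finally show ?thesis .
qed

lemma col_summable:
  fixes T :: "'a mat"
  assumes "Bnd T c" "\<And>F. finite F \<Longrightarrow> n2 F a \<le> \<alpha>"
  shows "(\<lambda>z. a z * T z y) summable_on UNIV \<and> cmod (infsum (\<lambda>z. a z * T z y) UNIV) \<le> sqrt \<alpha> * sqrt (c^2)"
  by (rule prod_summable[OF assms(2) Bnd_col[OF assms(1)]])

lemma infsum_lin:
  fixes f :: "'b \<Rightarrow> 'a \<Rightarrow> complex"
  assumes "finite Y" "\<And>y. y \<in> Y \<Longrightarrow> f y summable_on UNIV"
  shows "(\<Sum>y\<in>Y. c y * infsum (f y) UNIV) = infsum (\<lambda>z. \<Sum>y\<in>Y. c y * f y z) UNIV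
         \<and> (\<lambda>z. \<Sum>y\<in>Y. c y * f y z) summable_on UNIV"
proof -
  have s: "(\<lambda>z. c y * f y z) summable_on UNIV" if "y \<in> Y" for y
    using assms(2)[OF that] by (rule summable_on_cmult_right)
  have e: "c y * infsum (f y) UNIV = infsum (\<lambda>z. c y * f y z) UNIV" if "y \<in> Y" for y
    using assms(2)[OF that] by (simp add: infsum_cmult_right)
  have "(\<Sum>y\<in>Y. c y * infsum (f y) UNIV) = (\<Sum>y\<in>Y. infsum (\<lambda>z. c y * f y z) UNIV)"
    using e by (rule sum.cong[OF refl])
  also have "\<dots> = infsum (\<lambda>z. \<Sum>y\<in>Y. c y * f y z) UNIV"
    using infsum_sum_fin[of Y "\<lambda>y z. c y * f y z" UNIV] assms(1) s by simp
  finally show ?thesis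
    using infsum_sum_fin[of Y "\<lambda>y z. c y * f y z" UNIV] assms(1) s by simp
qed

lemma L_bound:
  fixes T :: "'a mat" and a :: "'a \<Rightarrow> complex"
  assumes B: "Bnd T c" and A: "\<And>F. finite F \<Longrightarrow> n2 F a \<le> \<alpha>" and fY: "finite Y"
  shows "n2 Y (\<lambda>y. infsum (\<lambda>z. a z * T z y) UNIV) \<le> c^2 * \<alpha>"
proof -
  have c0: "0 \<le> c" using B Bnd_def by blast
  have a0: "0 \<le> \<alpha>" using A[of "{}"] by (simp add: n2_def)
  define g where "g = (\<lambda>y. infsum (\<lambda>z. a z * T z y) UNIV)"
  define s where "s = n2 Y g"
  have s0: "0 \<le> s" unfolding s_def by (rule n2_nonneg)
  have summ: "(\<lambda>z. a z * T z y) summable_on UNIV" for y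
    using col_summable[OF B A] by blast
  define d where "d = (\<lambda>z. \<Sum>y\<in>Y. T z y * cnj (g y))"
  have "complex_of_real s = (\<Sum>y\<in>Y. cnj (g y) * g y)"
    unfolding s_def by (rule n2_cnj_mult[symmetric])
  also have "\<dots> = (\<Sum>y\<in>Y. cnj (g y) * infsum (\<lambda>z. a z * T z y) UNIV)"
    unfolding g_def ..
  also have "\<dots> = infsum (\<lambda>z. \<Sum>y\<in>Y. cnj (g y) * (a z * T z y)) UNIV"
    using infsum_lin[of Y "\<lambda>y z. a z * T z y" "\<lambda>y. cnj (g y)"] fY summ by blast
  also have "\<dots> = infsum (\<lambda>z. a z * d z) UNIV"
    unfolding d_def by (simp add: sum_distrib_left mult_ac)
  finally have es: "complex_of_real s = infsum (\<lambda>z. a z * d z) UNIV" .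
  have dF: "n2 F d \<le> c^2 * s" if "finite F" for F
    unfolding d_def s_def using OpBD[OF Bnd_OpB[OF B] that fY, of "\<lambda>y. cnj (g y)"] by simp
  have "cmod (infsum (\<lambda>z. a z * d z) UNIV) \<le> sqrt \<alpha> * sqrt (c^2 * s)"
    using prod_summable[OF A dF] by blast
  then have "cmod (complex_of_real s) \<le> sqrt \<alpha> * sqrt (c^2 * s)"
    by (simp only: es)
  then have ss: "s \<le> (c * sqrt \<alpha>) * sqrt s"
    using s0 c0 by (simp add: real_sqrt_mult mult_ac)
  have "s \<le> (c * sqrt \<alpha>)^2"
    using sqrt_bound_aux[OF s0 _ ss] c0 a0 by simp
  then show ?thesis unfolding s_def g_def using a0 by (simp add: power_mult_distrib)
qed

lemma Bnd_mult:
  fixes S T :: "'a mat"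
  assumes BS: "Bnd S a" and BT: "Bnd T b"
  shows "Bnd (mmul S T) (a * b)"
  unfolding Bnd_def
proof (intro conjI allI impI)
  have a0: "0 \<le> a" and b0: "0 \<le> b" using assms Bnd_def by auto
  then show "0 \<le> a * b" by simp
  fix X Y :: "'a set" and v w assume fX: "finite X" and fY: "finite Y"
  have summ: "(\<lambda>z. S x z * T z y) summable_on UNIV" for x y
    using prod_summable[OF Bnd_row[OF BS] Bnd_col[OF BT]] by blast
  have inner: "(\<Sum>y\<in>Y. w x * mmul S T x y * v y) = infsum (\<lambda>z. \<Sum>y\<in>Y. (w x * v y) * (S x z * T z y)) UNIV
     \<and> (\<lambda>z. \<Sum>y\<in>Y. (w x * v y) * (S x z * T z y)) summable_on UNIV" for x
  proof -
    have "(\<Sum>y\<in>Y. w x * mmul S T x y * v y) = (\<Sum>y\<in>Y. (w x * v y) * infsum (\<lambda>z. S x z * T z y) UNIV)"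
      unfolding mmul_def by (simp add: mult_ac)
    then show ?thesis
      using infsum_lin[of Y "\<lambda>y z. S x z * T z y" "\<lambda>y. w x * v y"] fY summ by simp
  qed
  have "(\<Sum>x\<in>X. \<Sum>y\<in>Y. w x * mmul S T x y * v y) = (\<Sum>x\<in>X. infsum (\<lambda>z. \<Sum>y\<in>Y. (w x * v y) * (S x z * T z y)) UNIV)"
    using inner by simp
  also have "\<dots> = infsum (\<lambda>z. \<Sum>x\<in>X. \<Sum>y\<in>Y. (w x * v y) * (S x z * T z y)) UNIV"
    using infsum_sum_fin[of X "\<lambda>x z. \<Sum>y\<in>Y. (w x * v y) * (S x z * T z y)" UNIV] fX inner by simp
  also have "\<dots> = infsum (\<lambda>z. (\<Sum>x\<in>X. w x * S x z) * (\<Sum>y\<in>Y. T z y * v y)) UNIV"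
    by (simp only: sum_product) (simp add: mult_ac)
  finally have e: "(\<Sum>x\<in>X. \<Sum>y\<in>Y. w x * mmul S T x y * v y) = infsum (\<lambda>z. (\<Sum>x\<in>X. w x * S x z) * (\<Sum>y\<in>Y. T z y * v y)) UNIV" .
  have "cmod (infsum (\<lambda>z. (\<Sum>x\<in>X. w x * S x z) * (\<Sum>y\<in>Y. T z y * v y)) UNIV) \<le> sqrt (a^2 * n2 X w) * sqrt (b^2 * n2 Y v)"
    using prod_summable[of "\<lambda>z. \<Sum>x\<in>X. w x * S x z" "a^2 * n2 X w" "\<lambda>z. \<Sum>y\<in>Y. T z y * v y" "b^2 * n2 Y v"]
      Bnd_left[OF BS fX] OpBD[OF Bnd_OpB[OF BT] _ fY] by blast
  also have "\<dots> = a * b * sqrt (n2 X w) * sqrt (n2 Y v)"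
    using a0 b0 by (simp add: real_sqrt_mult)
  finally show "cmod (\<Sum>x\<in>X. \<Sum>y\<in>Y. w x * mmul S T x y * v y) \<le> a * b * sqrt (n2 X w) * sqrt (n2 Y v)"
    unfolding e .
qed



lemma ulfD:
  assumes "unif_locally_finite TYPE('a::metric_space)" "0 < r"
  obtains N :: nat where "\<And>x::'a. finite (cball x r) \<and> card (cball x r) \<le> N"
  using assms unfolding unif_locally_finite_def by blast

lemma RowT_mult:
  fixes S T :: "('a::metric_space) mat"
  assumes ulf: "unif_locally_finite TYPE('a)"
    and BS: "Bnd S a" and BT: "Bnd T b" and RS: "RowT S" and RT: "RowT T"
  shows "RowT (mmul S T)"
proof (rule RowTI)
  fix \<eta> :: real assume e: "\<eta> > 0"
  have a0: "0 \<le> a" and b0: "0 \<le> b" using BS BT Bnd_def by auto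
  define \<eta>1 where "\<eta>1 = \<eta> / (4 * (b^2 + 1))"
  have e1: "\<eta>1 > 0" unfolding \<eta>1_def using e by (simp add: add_nonneg_pos)
  obtain r1 where r1: "\<And>x Y. finite Y \<Longrightarrow> (\<forall>y\<in>Y. r1 < dist x y) \<Longrightarrow> n2 Y (S x) \<le> \<eta>1"
    using RowTD[OF RS e1] by blast
  define R1 where "R1 = max r1 1"
  obtain N where N: "\<And>x::'a. finite (cball x R1) \<and> card (cball x R1) \<le> N"
  proof -
    have "0 < R1" unfolding R1_def by simp
    then show ?thesis using ulfD[OF ulf] that by blast
  qed
  define \<eta>2 where "\<eta>2 = \<eta> / (4 * (a^2 + 1) * (real N + 1))"
  have e2: "\<eta>2 > 0" unfolding \<eta>2_def using e by (simp add: add_nonneg_pos)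
  obtain r2 where r2: "\<And>x Y. finite Y \<Longrightarrow> (\<forall>y\<in>Y. r2 < dist x y) \<Longrightarrow> n2 Y (T x) \<le> \<eta>2"
    using RowTD[OF RT e2] by blast
  show "\<exists>r. \<forall>x Y. finite Y \<longrightarrow> (\<forall>y\<in>Y. r < dist x y) \<longrightarrow> n2 Y (mmul S T x) \<le> \<eta>"
  proof (intro exI allI impI)
    fix x :: 'a and Y assume fY: "finite Y" and d: "\<forall>y\<in>Y. R1 + r2 < dist x y"
    define Nb where "Nb = cball x R1"
    have fNb: "finite Nb" and cNb: "card Nb \<le> N" using N unfolding Nb_def by auto
    define a1 where "a1 = (\<lambda>z. if z \<in> Nb then S x z else 0)"
    define a2 where "a2 = (\<lambda>z. if z \<in> Nb then 0 else S x z)"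
    define P1 where "P1 = (\<lambda>y. \<Sum>z\<in>Nb. S x z * T z y)"
    define P2 where "P2 = (\<lambda>y. infsum (\<lambda>z. a2 z * T z y) UNIV)"
    have na1: "n2 F a1 \<le> a^2" if "finite F" for F
    proof -
      have "n2 F a1 \<le> n2 F (S x)" unfolding n2_def a1_def by (rule sum_mono) auto
      also have "\<dots> \<le> a^2" by (rule Bnd_row[OF BS that])
      finally show ?thesis .
    qed
    have na2: "n2 F a2 \<le> \<eta>1" if fF: "finite F" for F
    proof -
      have "n2 F a2 = n2 {z\<in>F. z \<notin> Nb} (S x)"
        unfolding n2_def a2_def using fF by (auto simp: sum.inter_filter intro!: sum.cong)
      also have "\<dots> \<le> \<eta>1"
        by (rule r1) (use fF in \<open>auto simp: Nb_def R1_def dist_commute\<close>)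
      finally show ?thesis .
    qed
    have split: "mmul S T x y = P1 y + P2 y" for y
    proof -
      have s1: "(\<lambda>z. a1 z * T z y) summable_on UNIV" using col_summable[OF BT na1] by blast
      have s2: "(\<lambda>z. a2 z * T z y) summable_on UNIV" using col_summable[OF BT na2] by blast
      have "mmul S T x y = infsum (\<lambda>z. a1 z * T z y + a2 z * T z y) UNIV"
        unfolding mmul_def a1_def a2_def by (intro arg_cong[where f="\<lambda>h. infsum h UNIV"] ext) simp
      also have "\<dots> = infsum (\<lambda>z. a1 z * T z y) UNIV + P2 y"
        unfolding P2_def by (rule infsum_add[OF s1 s2])
      also have "infsum (\<lambda>z. a1 z * T z y) UNIV = P1 y"
        unfolding P1_def by (subst infsum_fin_supp[OF fNb]) (auto simp: a1_def intro!: sum.cong)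
      finally show ?thesis .
    qed
    have "n2 Y (mmul S T x) = n2 Y (\<lambda>y. P1 y + P2 y)" unfolding split ..
    also have "\<dots> \<le> 2 * n2 Y P1 + 2 * n2 Y P2" by (rule n2_add_le)
    also have "n2 Y P2 \<le> b^2 * \<eta>1" unfolding P2_def by (rule L_bound[OF BT na2 fY])
    also have "n2 Y P1 \<le> a^2 * (real N * \<eta>2)"
    proof -
      have "n2 Y P1 \<le> (\<Sum>y\<in>Y. a^2 * n2 Nb (\<lambda>z. T z y))"
        unfolding P1_def n2_def[of Y]
      proof (rule sum_mono)
        fix y
        have "(cmod (\<Sum>z\<in>Nb. S x z * T z y))^2 \<le> n2 Nb (S x) * n2 Nb (\<lambda>z. T z y)" by (rule CS_fin2)
        also have "\<dots> \<le> a^2 * n2 Nb (\<lambda>z. T z y)"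
          by (rule mult_right_mono[OF Bnd_row[OF BS fNb] n2_nonneg])
        finally show "(cmod (\<Sum>z\<in>Nb. S x z * T z y))^2 \<le> a^2 * n2 Nb (\<lambda>z. T z y)" .
      qed
      also have "\<dots> = a^2 * (\<Sum>z\<in>Nb. n2 Y (T z))"
        unfolding n2_def by (simp add: sum_distrib_left[symmetric] sum.swap[of _ Y])
      also have "\<dots> \<le> a^2 * (\<Sum>z\<in>Nb. \<eta>2)"
      proof (rule mult_left_mono[OF sum_mono])
        fix z assume zN: "z \<in> Nb"
        show "n2 Y (T z) \<le> \<eta>2"
        proof (rule r2[OF fY], intro ballI)
          fix y assume "y \<in> Y"
          then have "R1 + r2 < dist x y" using d by blast
          moreover have "dist x z \<le> R1" using zN unfolding Nb_def by simp
          moreover have "dist x y \<le> dist x z + dist z y" by (rule dist_triangle)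
          ultimately show "r2 < dist z y" by linarith
        qed
      qed simp
      also have "\<dots> = a^2 * (real (card Nb) * \<eta>2)" by simp
      also have "\<dots> \<le> a^2 * (real N * \<eta>2)"
        using cNb e2 by (intro mult_left_mono mult_right_mono) auto
      finally show ?thesis .
    qed
    finally have "n2 Y (mmul S T x) \<le> 2 * (a^2 * (real N * \<eta>2)) + 2 * (b^2 * \<eta>1)"
      by simp
    also have "\<dots> \<le> \<eta>"
    proof -
      have A: "a^2 * (real N * \<eta>2) \<le> \<eta>/4"
      proof -
        have "a^2 * (real N * \<eta>2) = (a^2 * real N) / ((a^2 + 1) * (real N + 1)) * (\<eta>/4)"
          unfolding \<eta>2_def by (simp add: field_simps)
        also have "\<dots> \<le> 1 * (\<eta>/4)"
        proof (rule mult_right_mono)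
          have "a^2 * real N \<le> (a^2 + 1) * (real N + 1)" by (simp add: algebra_simps)
          then show "(a^2 * real N) / ((a^2 + 1) * (real N + 1)) \<le> 1"
            by (simp add: divide_le_eq_1 add_pos_pos add_nonneg_pos)
        qed (use e in simp)
        finally show ?thesis by simp
      qed
      have B: "b^2 * \<eta>1 \<le> \<eta>/4"
      proof -
        have "b^2 * \<eta>1 = b^2 / (b^2 + 1) * (\<eta>/4)"
          unfolding \<eta>1_def by (simp add: field_simps)
        also have "\<dots> \<le> 1 * (\<eta>/4)"
          by (rule mult_right_mono) (use e in \<open>auto simp: divide_le_eq_1 add_nonneg_pos\<close>)
        finally show ?thesis by simp
      qed
      show ?thesis using A B by linarith
    qed
    finally show "n2 Y (mmul S T x) \<le> \<eta>" .
  qed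
qed

lemma madj_mmul: "madj (mmul S T) = mmul (madj T) (madj S)"
  unfolding madj_def mmul_def
  by (intro ext) (simp del: infsum_cnj add: infsum_cnj[symmetric] mult.commute)

lemma Good_mult:
  fixes S T :: "('a::metric_space) mat"
  assumes ulf: "unif_locally_finite TYPE('a)" and "Good S" "Good T"
  shows "Good (mmul S T)"
proof -
  obtain a b where BS: "Bnd S a" and BT: "Bnd T b" and RS: "RowT S" "RowT (madj S)" and RT: "RowT T" "RowT (madj T)"
    using assms unfolding Good_def by blast
  have "Bnd (mmul S T) (a * b)" by (rule Bnd_mult[OF BS BT])
  moreover have "RowT (mmul S T)" by (rule RowT_mult[OF ulf BS BT RS(1) RT(1)])
  moreover have "RowT (madj (mmul S T))"
    unfolding madj_mmul by (rule RowT_mult[OF ulf Bnd_adj[OF BT] Bnd_adj[OF BS] RT(2) RS(2)])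
  ultimately show ?thesis unfolding Good_def by blast
qed



definition rv :: "'a set \<Rightarrow> ('a \<Rightarrow> complex) \<Rightarrow> 'a \<Rightarrow> complex" where
  "rv Y v = (\<lambda>y. if y \<in> Y then v y else 0)"

lemma mvec_rv:
  assumes "finite Y"
  shows "mvec M (rv Y v) x = (\<Sum>y\<in>Y. M x y * v y)"
proof -
  have e: "{y. rv Y v y \<noteq> 0} = {y\<in>Y. v y \<noteq> 0}" unfolding rv_def by auto
  have "mvec M (rv Y v) x = (\<Sum>y\<in>{y\<in>Y. v y \<noteq> 0}. M x y * rv Y v y)"
    unfolding mvec_def e ..
  also have "\<dots> = (\<Sum>y\<in>Y. M x y * v y)"
    using assms by (auto simp: sum.inter_filter rv_def intro!: sum.cong)
  finally show ?thesis .
qed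

lemma fin_supp_rv: "finite Y \<Longrightarrow> fin_supp (rv Y v)"
  unfolding fin_supp_def rv_def by (auto intro: finite_subset)

lemma l2norm_fin:
  assumes "finite Y" "\<And>y. y \<notin> Y \<Longrightarrow> v y = 0"
  shows "l2norm v = sqrt (n2 Y v)"
  unfolding l2norm_def n2_def using assms by (subst infsum_fin_supp[OF assms(1)]) auto

lemma l2norm_nonneg: "0 \<le> l2norm v"
  unfolding l2norm_def by (simp add: infsum_nonneg)

lemma OpB_BO:
  assumes "OpB M K" "fin_supp v"
  shows "(\<lambda>x. (cmod (mvec M v x))^2) summable_on UNIV \<and> l2norm (mvec M v) \<le> K * l2norm v"
proof -
  define Y where "Y = {y. v y \<noteq> 0}"
  have fY: "finite Y" using assms(2) unfolding Y_def fin_supp_def .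
  have K0: "0 \<le> K" using assms(1) OpB_def by blast
  have mv: "mvec M v x = (\<Sum>y\<in>Y. M x y * v y)" for x unfolding mvec_def Y_def ..
  have fs: "sum (\<lambda>x. (cmod (mvec M v x))^2) F \<le> K^2 * n2 Y v" if "finite F" for F
    using OpBD[OF assms(1) that fY, of v] unfolding mv n2_def by simp
  have h: "(\<lambda>x. (cmod (mvec M v x))^2) summable_on UNIV \<and> infsum (\<lambda>x. (cmod (mvec M v x))^2) UNIV \<le> K^2 * n2 Y v"
    by (rule nonneg_fin_bound) (use fs in auto)
  have "l2norm (mvec M v) \<le> sqrt (K^2 * n2 Y v)"
    unfolding l2norm_def using h by simp
  also have "\<dots> = K * sqrt (n2 Y v)" using K0 by (simp add: real_sqrt_mult)
  also have "sqrt (n2 Y v) = l2norm v"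
    by (rule l2norm_fin[symmetric]) (use fY in \<open>auto simp: Y_def\<close>)
  finally show ?thesis using h by simp
qed

lemma BO_OpB:
  assumes BO: "\<And>v. fin_supp v \<Longrightarrow> l2norm v \<le> 1 \<Longrightarrow>
     (\<lambda>x. (cmod (mvec M v x))^2) summable_on UNIV \<and> l2norm (mvec M v) \<le> K"
    and K0: "0 \<le> K"
  shows "OpB M K"
  unfolding OpB_def
proof (intro conjI allI impI K0)
  fix X Y :: "'a set" and v assume fX: "finite X" and fY: "finite Y"
  define s where "s = n2 Y v"
  have s0: "0 \<le> s" unfolding s_def by (rule n2_nonneg)
  show "n2 X (\<lambda>x. \<Sum>y\<in>Y. M x y * v y) \<le> K^2 * n2 Y v"
  proof (cases "s = 0")
    case True
    then have "\<forall>y\<in>Y. (cmod (v y))^2 = 0"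
      using fY unfolding s_def n2_def by (subst sum_nonneg_eq_0_iff[symmetric]) auto
    then have "\<forall>y\<in>Y. v y = 0" by simp
    then have "(\<Sum>y\<in>Y. M x y * v y) = 0" for x by simp
    then show ?thesis by (simp add: n2_def sum_nonneg)
  next
    case False
    then have sp: "0 < s" using s0 by simp
    define c where "c = complex_of_real (1 / sqrt s)"
    have "cmod c = 1 / sqrt s" unfolding c_def norm_of_real using sp by simp
    then have cc: "(cmod c)^2 = 1 / s" using sp by (simp add: power_divide)
    define v' where "v' = rv Y (\<lambda>y. c * v y)"
    have fs: "fin_supp v'" unfolding v'_def by (rule fin_supp_rv[OF fY])
    have l2: "l2norm v' = 1"
    proof -
      have "l2norm v' = sqrt (n2 Y v')"
        by (rule l2norm_fin[OF fY]) (simp add: v'_def rv_def)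
      also have "n2 Y v' = n2 Y (\<lambda>y. c * v y)"
        unfolding v'_def rv_def n2_def by simp
      also have "\<dots> = 1" using cc sp by (simp add: n2_smul s_def[symmetric])
      finally show ?thesis by simp
    qed
    have mv: "mvec M v' x = c * (\<Sum>y\<in>Y. M x y * v y)" for x
      unfolding v'_def mvec_rv[OF fY] by (simp add: sum_distrib_left mult_ac)
    obtain sm: "(\<lambda>x. (cmod (mvec M v' x))^2) summable_on UNIV" and le: "l2norm (mvec M v') \<le> K"
      using BO[OF fs] l2 by auto
    have "infsum (\<lambda>x. (cmod (mvec M v' x))^2) UNIV \<le> K^2"
    proof -
      have i0: "0 \<le> infsum (\<lambda>x. (cmod (mvec M v' x))^2) UNIV" by (rule infsum_nonneg) simp
      have "sqrt (infsum (\<lambda>x. (cmod (mvec M v' x))^2) UNIV) \<le> K" using le unfolding l2norm_def .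
      then have "(sqrt (infsum (\<lambda>x. (cmod (mvec M v' x))^2) UNIV))^2 \<le> K^2"
        by (rule power_mono) (simp add: i0)
      then show ?thesis using i0 by simp
    qed
    moreover have "n2 X (mvec M v') \<le> infsum (\<lambda>x. (cmod (mvec M v' x))^2) UNIV"
      unfolding n2_def by (rule finite_sum_le_infsum[OF sm fX]) auto
    moreover have "n2 X (mvec M v') = (1/s) * n2 X (\<lambda>x. \<Sum>y\<in>Y. M x y * v y)"
      unfolding mv n2_smul cc ..
    ultimately have "(1/s) * n2 X (\<lambda>x. \<Sum>y\<in>Y. M x y * v y) \<le> K^2" by simp
    then show ?thesis using sp unfolding s_def[symmetric] by (simp add: field_simps)
  qed
qed

lemma OpB_diff:
  assumes "OpB T c1" "OpB S c2"
  shows "OpB (mdiff T S) (c1 + c2)"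
  unfolding OpB_def
proof (intro conjI allI impI)
  have c1: "0 \<le> c1" and c2: "0 \<le> c2" using assms OpB_def by auto
  then show "0 \<le> c1 + c2" by simp
  fix X Y :: "'a set" and v assume fX: "finite X" and fY: "finite Y"
  define bT where "bT = (\<lambda>x. \<Sum>y\<in>Y. T x y * v y)"
  define bS where "bS = (\<lambda>x. \<Sum>y\<in>Y. S x y * v y)"
  have eb: "(\<lambda>x. \<Sum>y\<in>Y. mdiff T S x y * v y) = (\<lambda>x. bT x - bS x)"
    unfolding bT_def bS_def mdiff_def by (simp add: sum_subtractf left_diff_distrib)
  have sT: "sqrt (n2 X bT) \<le> c1 * sqrt (n2 Y v)"
  proof -
    have "sqrt (n2 X bT) \<le> sqrt (c1^2 * n2 Y v)" unfolding bT_def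
      by (rule real_sqrt_le_mono[OF OpBD[OF assms(1) fX fY]])
    then show ?thesis using c1 by (simp add: real_sqrt_mult)
  qed
  have sS: "sqrt (n2 X bS) \<le> c2 * sqrt (n2 Y v)"
  proof -
    have "sqrt (n2 X bS) \<le> sqrt (c2^2 * n2 Y v)" unfolding bS_def
      by (rule real_sqrt_le_mono[OF OpBD[OF assms(2) fX fY]])
    then show ?thesis using c2 by (simp add: real_sqrt_mult)
  qed
  have "sqrt (n2 X (\<lambda>x. bT x - bS x)) = L2_set (\<lambda>x. cmod (bT x - bS x)) X" by (simp add: L2_set_n2)
  also have "\<dots> \<le> L2_set (\<lambda>x. cmod (bT x) + cmod (bS x)) X"
    by (rule L2_set_mono) (auto simp: norm_triangle_ineq4)
  also have "\<dots> \<le> L2_set (\<lambda>x. cmod (bT x)) X + L2_set (\<lambda>x. cmod (bS x)) X"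
    by (rule L2_set_triangle_ineq)
  also have "\<dots> \<le> (c1 + c2) * sqrt (n2 Y v)" using sT sS by (simp add: L2_set_n2 algebra_simps)
  finally have h: "sqrt (n2 X (\<lambda>x. bT x - bS x)) \<le> (c1 + c2) * sqrt (n2 Y v)" .
  have "n2 X (\<lambda>x. bT x - bS x) = (sqrt (n2 X (\<lambda>x. bT x - bS x)))^2"
    by (rule real_sqrt_pow2[OF n2_nonneg, symmetric])
  also have "\<dots> \<le> ((c1 + c2) * sqrt (n2 Y v))^2" by (rule power_mono[OF h]) (simp add: n2_nonneg)
  also have "\<dots> = (c1 + c2)^2 * n2 Y v" by (simp add: power_mult_distrib n2_nonneg)
  finally show "n2 X (\<lambda>x. \<Sum>y\<in>Y. mdiff T S x y * v y) \<le> (c1 + c2)^2 * n2 Y v" unfolding eb .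
qed

lemma OpB_opnorm:
  assumes "OpB D K"
  shows "OpB D (opnorm D)"
proof -
  define A where "A = {l2norm (mvec D v) | v. fin_supp v \<and> l2norm v \<le> 1}"
  have K0: "0 \<le> K" using assms OpB_def by blast
  have ub: "a \<le> K" if aA: "a \<in> A" for a
  proof -
    obtain v where v: "a = l2norm (mvec D v)" "fin_supp v" "l2norm v \<le> 1" using aA unfolding A_def by blast
    have "l2norm (mvec D v) \<le> K * l2norm v" using OpB_BO[OF assms v(2)] by blast
    also have "\<dots> \<le> K * 1" using v(3) K0 by (rule mult_left_mono)
    finally show ?thesis using v(1) by simp
  qed
  have bdd: "bdd_above A" unfolding bdd_above_def using ub by blast
  have z: "fin_supp (\<lambda>_. 0 :: complex)" unfolding fin_supp_def by simp
  have l0: "l2norm (\<lambda>_. 0 :: complex) = 0" unfolding l2norm_def by simp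
  have inA: "l2norm (mvec D v) \<in> A" if "fin_supp v" "l2norm v \<le> 1" for v
    using that unfolding A_def by blast
  have op: "opnorm D = Sup A" unfolding opnorm_def A_def ..
  have le: "l2norm (mvec D v) \<le> opnorm D" if "fin_supp v" "l2norm v \<le> 1" for v
    unfolding op by (rule cSup_upper[OF inA[OF that] bdd])
  have "l2norm (mvec D (\<lambda>_. 0)) \<le> opnorm D" by (rule le[OF z]) (simp add: l0)
  then have "0 \<le> opnorm D"
    using l2norm_nonneg[of "mvec D (\<lambda>_. 0)"] by linarith
  then show ?thesis
    by (intro BO_OpB) (use le OpB_BO[OF assms] in auto)
qed

lemma RowT_approx:
  assumes "\<And>\<eta>. \<eta> > 0 \<Longrightarrow> \<exists>T'. RowT T' \<and> (\<forall>x Y. finite Y \<longrightarrow> n2 Y (\<lambda>y. M x y - T' x y) \<le> \<eta>)"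
  shows "RowT M"
proof (rule RowTI)
  fix \<eta> :: real assume e: "\<eta> > 0"
  obtain T' where RT: "RowT T'" and ap: "\<And>x Y. finite Y \<Longrightarrow> n2 Y (\<lambda>y. M x y - T' x y) \<le> \<eta>/4"
    using assms[of "\<eta>/4"] e by auto
  obtain r where r: "\<And>x Y. finite Y \<Longrightarrow> (\<forall>y\<in>Y. r < dist x y) \<Longrightarrow> n2 Y (T' x) \<le> \<eta>/4"
    using RowTD[OF RT, of "\<eta>/4"] e by auto
  show "\<exists>r. \<forall>x Y. finite Y \<longrightarrow> (\<forall>y\<in>Y. r < dist x y) \<longrightarrow> n2 Y (M x) \<le> \<eta>"
  proof (intro exI allI impI)
    fix x :: 'a and Y assume f: "finite Y" and d: "\<forall>y\<in>Y. r < dist x y"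
    have "n2 Y (M x) = n2 Y (\<lambda>y. T' x y + (M x y - T' x y))" by simp
    also have "\<dots> \<le> 2 * n2 Y (T' x) + 2 * n2 Y (\<lambda>y. M x y - T' x y)" by (rule n2_add_le)
    also have "\<dots> \<le> \<eta>"
    proof -
      have "n2 Y (\<lambda>y. M x y - T' x y) \<le> \<eta>/4" by (rule ap[OF f])
      then show ?thesis using r[OF f d] by linarith
    qed
    finally show "n2 Y (M x) \<le> \<eta>" .
  qed
qed

lemma cmod_cnj_diff: "cmod (cnj a - cnj b) = cmod (b - a)"
proof -
  have "cnj a - cnj b = cnj (a - b)" by simp
  then have "cmod (cnj a - cnj b) = cmod (a - b)" by (simp only: complex_mod_cnj)
  also have "\<dots> = cmod (b - a)" by (rule norm_minus_commute)
  finally show ?thesis .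
qed

lemma Good_lim:
  fixes S :: "('a::metric_space) mat"
  assumes G: "\<And>n. Good (T n)" and bo: "bounded_op S"
    and lim: "(\<lambda>n. opnorm (mdiff (T n) S)) \<longlonglongrightarrow> 0"
  shows "Good S"
proof -
  obtain C where C: "\<And>v. fin_supp v \<Longrightarrow> (\<lambda>x. (cmod (mvec S v x))^2) summable_on UNIV \<and> l2norm (mvec S v) \<le> C * l2norm v"
    using bo unfolding bounded_op_def by blast
  have OS: "OpB S (max C 0)"
  proof (rule BO_OpB)
    fix v :: "'a \<Rightarrow> complex" assume fv: "fin_supp v" and l: "l2norm v \<le> 1"
    have "C * l2norm v \<le> max C 0 * l2norm v" by (rule mult_right_mono) (auto simp: l2norm_nonneg)
    also have "\<dots> \<le> max C 0 * 1" by (rule mult_left_mono[OF l]) simp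
    finally show "(\<lambda>x. (cmod (mvec S v x))^2) summable_on UNIV \<and> l2norm (mvec S v) \<le> max C 0"
      using C[OF fv] by auto
  qed simp
  have OD: "OpB (mdiff (T n) S) (opnorm (mdiff (T n) S))" for n
  proof -
    obtain c where "Bnd (T n) c" using G[of n] unfolding Good_def by blast
    then have "OpB (mdiff (T n) S) (c + max C 0)" by (rule OpB_diff[OF Bnd_OpB OS])
    then show ?thesis by (rule OpB_opnorm)
  qed
  have small: "\<exists>n. (opnorm (mdiff (T n) S))^2 \<le> \<eta>" if "\<eta> > 0" for \<eta>
  proof -
    have "sqrt \<eta> > 0" using that by simp
    then obtain n where "norm (opnorm (mdiff (T n) S) - 0) < sqrt \<eta>"
      using LIMSEQ_D[OF lim] by blast
    then have "\<bar>opnorm (mdiff (T n) S)\<bar> \<le> sqrt \<eta>" by simp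
    then have "\<bar>opnorm (mdiff (T n) S)\<bar>^2 \<le> (sqrt \<eta>)^2" by (rule power_mono) simp
    also have "(sqrt \<eta>)^2 = \<eta>" using that by simp
    finally have "(opnorm (mdiff (T n) S))^2 \<le> \<eta>" by (simp only: power2_abs)
    then show ?thesis by blast
  qed
  have R1: "RowT S"
  proof (rule RowT_approx)
    fix \<eta> :: real assume "\<eta> > 0"
    then obtain n where n: "(opnorm (mdiff (T n) S))^2 \<le> \<eta>" using small by blast
    show "\<exists>T'. RowT T' \<and> (\<forall>x Y. finite Y \<longrightarrow> n2 Y (\<lambda>y. S x y - T' x y) \<le> \<eta>)"
    proof (intro exI conjI allI impI)
      show "RowT (T n)" using G[of n] unfolding Good_def by blast
      fix x :: 'a and Y :: "'a set" assume f: "finite Y"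
      have "n2 Y (\<lambda>y. S x y - T n x y) = n2 Y (mdiff (T n) S x)"
        unfolding n2_def mdiff_def by (intro sum.cong refl arg_cong[where f="\<lambda>t. t^2"] norm_minus_commute)
      also have "\<dots> \<le> (opnorm (mdiff (T n) S))^2" by (rule Bnd_row[OF OpB_Bnd[OF OD] f])
      finally show "n2 Y (\<lambda>y. S x y - T n x y) \<le> \<eta>" using n by simp
    qed
  qed
  have R2: "RowT (madj S)"
  proof (rule RowT_approx)
    fix \<eta> :: real assume "\<eta> > 0"
    then obtain n where n: "(opnorm (mdiff (T n) S))^2 \<le> \<eta>" using small by blast
    show "\<exists>T'. RowT T' \<and> (\<forall>x Y. finite Y \<longrightarrow> n2 Y (\<lambda>y. madj S x y - T' x y) \<le> \<eta>)"
    proof (intro exI conjI allI impI)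
      show "RowT (madj (T n))" using G[of n] unfolding Good_def by blast
      fix x :: 'a and Y :: "'a set" assume f: "finite Y"
      have "n2 Y (\<lambda>y. madj S x y - madj (T n) x y) = n2 Y (\<lambda>y. mdiff (T n) S y x)"
        unfolding n2_def mdiff_def madj_def
        by (intro sum.cong refl arg_cong[where f="\<lambda>t. t^2"]) (rule cmod_cnj_diff)
      also have "\<dots> \<le> (opnorm (mdiff (T n) S))^2" by (rule Bnd_col[OF OpB_Bnd[OF OD] f])
      finally show "n2 Y (\<lambda>y. madj S x y - madj (T n) x y) \<le> \<eta>" using n by simp
    qed
  qed
  show ?thesis unfolding Good_def using OpB_Bnd[OF OS] R1 R2 by blast
qed

lemma uroe_Good:
  assumes ulf: "unif_locally_finite TYPE('a::metric_space)"
  shows "(T :: 'a mat) \<in> uroe \<Longrightarrow> Good T"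
proof (induction rule: uroe.induct)
  case (gen D g) then show ?case by (rule Good_vmat)
next
  case (add S T) then show ?case using Good_add by blast
next
  case (smul T c) then show ?case using Good_smul by blast
next
  case (mult S T) then show ?case using Good_mult[OF ulf] by blast
next
  case (adj T) then show ?case using Good_adj by blast
next
  case (lim T S) then show ?case using Good_lim[of T S] by blast
qed



lemma proj_vmat: "proj B = vmat B id"
  unfolding proj_def vmat_def by (intro ext) auto

lemma proj_uroe: "proj (B::'a::metric_space set) \<in> uroe"
proof -
  have "partial_translation B (id :: 'a \<Rightarrow> 'a)"
    unfolding partial_translation_def by (intro conjI exI[of _ 0]) auto
  then show ?thesis unfolding proj_vmat by (rule uroe.gen)
qed

lemma madj_proj: "madj (proj B) = proj B"
  unfolding madj_def proj_def by (intro ext) auto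

lemma mmul_proj: "mmul (proj B) (proj B) = proj B"
  unfolding mmul_def
proof (intro ext)
  fix x y
  show "infsum (\<lambda>z. proj B x z * proj B z y) UNIV = proj B x y"
    by (subst infsum_single[where a = x]) (auto simp: proj_def)
qed

lemma exx_proj: "exx x = proj {x}"
  unfolding exx_def proj_def by (intro ext) auto

lemma proj_split: "x \<in> A \<Longrightarrow> proj A = madd (proj (A - {x})) (proj {x})"
  unfolding proj_def madd_def by (intro ext) auto

lemma cnj_mult_self: "cnj a * a = complex_of_real ((cmod a)^2)"
  by (metis complex_norm_square mult.commute of_real_power)

definition qv :: "('a mat \<Rightarrow> 'a mat) \<Rightarrow> 'a set \<Rightarrow> 'a \<Rightarrow> real" where
  "qv \<sigma> B y = infsum (\<lambda>z. (cmod (\<sigma> (proj B) z y))^2) UNIV"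

lemma qv_nonneg: "0 \<le> qv \<sigma> B y"
  unfolding qv_def by (rule infsum_nonneg) simp

lemma diag_qv:
  assumes aut: "uroe_automorphism \<sigma>"
  shows "\<sigma> (proj (B::'a::metric_space set)) y y = complex_of_real (qv \<sigma> B y)"
proof -
  have hom_mul: "\<sigma> (mmul S T) = mmul (\<sigma> S) (\<sigma> T)" if "S \<in> uroe" "T \<in> uroe" for S T
    using aut that unfolding uroe_automorphism_def by blast
  have hom_adj: "\<sigma> (madj T) = madj (\<sigma> T)" if "T \<in> uroe" for T
    using aut that unfolding uroe_automorphism_def by blast
  have "\<sigma> (proj B) = \<sigma> (mmul (madj (proj B)) (proj B))" by (simp add: madj_proj mmul_proj)
  also have "\<dots> = mmul (madj (\<sigma> (proj B))) (\<sigma> (proj B))"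
    using hom_mul[OF uroe.adj[OF proj_uroe] proj_uroe] hom_adj[OF proj_uroe] by simp
  finally have e: "\<sigma> (proj B) = mmul (madj (\<sigma> (proj B))) (\<sigma> (proj B))" .
  have "\<sigma> (proj B) y y = infsum (\<lambda>z. cnj (\<sigma> (proj B) z y) * \<sigma> (proj B) z y) UNIV"
    by (subst e) (simp add: mmul_def madj_def)
  also have "\<dots> = infsum (\<lambda>z. complex_of_real ((cmod (\<sigma> (proj B) z y))^2)) UNIV"
    by (simp only: cnj_mult_self)
  also have "\<dots> = complex_of_real (qv \<sigma> B y)" unfolding qv_def by (rule infsum_of_real_c)
  finally show ?thesis .
qed

lemma qv_split:
  assumes aut: "uroe_automorphism \<sigma>" and xA: "x \<in> A"
  shows "qv \<sigma> (A::'a::metric_space set) y = qv \<sigma> (A - {x}) y + qv \<sigma> {x} y"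
proof -
  have "\<sigma> (proj A) = madd (\<sigma> (proj (A - {x}))) (\<sigma> (proj {x}))"
    using aut proj_uroe unfolding proj_split[OF xA] uroe_automorphism_def by blast
  then have "\<sigma> (proj A) y y = \<sigma> (proj (A - {x})) y y + \<sigma> (proj {x}) y y"
    unfolding madd_def by metis
  then have "complex_of_real (qv \<sigma> A y) = complex_of_real (qv \<sigma> (A - {x}) y + qv \<sigma> {x} y)"
    unfolding diag_qv[OF aut] by simp
  then show ?thesis using of_real_eq_iff by blast
qed

lemma qv_le1:
  assumes aut: "uroe_automorphism \<sigma>"
  shows "qv \<sigma> (B::'a::metric_space set) y \<le> 1"
proof -
  define q where "q = qv \<sigma> B y"
  have q0: "0 \<le> q" unfolding q_def by (rule qv_nonneg)
  have cm: "cmod (\<sigma> (proj B) y y) = q" unfolding diag_qv[OF aut] q_def norm_of_real by (rule abs_of_nonneg[OF qv_nonneg])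
  have "(cmod (\<sigma> (proj B) y y))^2 \<le> q"
  proof (cases "(\<lambda>z. (cmod (\<sigma> (proj B) z y))^2) summable_on UNIV")
    case True
    have "sum (\<lambda>z. (cmod (\<sigma> (proj B) z y))^2) {y} \<le> infsum (\<lambda>z. (cmod (\<sigma> (proj B) z y))^2) UNIV"
      by (rule finite_sum_le_infsum[OF True]) auto
    then show ?thesis unfolding q_def qv_def by simp
  next
    case False
    then have "q = 0" unfolding q_def qv_def by (simp add: infsum_not_exists)
    then show ?thesis using cm by simp
  qed
  then have "q * q \<le> 1 * q" using cm by (simp add: power2_eq_square)
  then have "q \<le> 1 \<or> q = 0" using q0
    by (metis less_eq_real_def mult_right_le_imp_le)
  then show ?thesis unfolding q_def by auto
qed

lemma qv_sum:
  assumes aut: "uroe_automorphism \<sigma>" and fF: "finite F"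
  shows "(\<Sum>x\<in>F. qv \<sigma> {x} y) \<le> qv \<sigma> (F::'a::metric_space set) y"
  using fF
proof (induction F rule: finite_induct)
  case empty then show ?case by (simp add: qv_nonneg)
next
  case (insert x F)
  have "qv \<sigma> (insert x F) y = qv \<sigma> (insert x F - {x}) y + qv \<sigma> {x} y"
    by (rule qv_split[OF aut]) simp
  also have "insert x F - {x} = F" using insert(2) by auto
  finally show ?case using insert by simp
qed

lemma qv_ge1:
  assumes aut: "uroe_automorphism \<sigma>" and xA: "x \<in> A"
  shows "qv \<sigma> {x} y \<le> qv \<sigma> (A::'a::metric_space set) y"
  using qv_split[OF aut xA, of y] qv_nonneg[of \<sigma> "A - {x}" y] by linarith

lemma qv_eps:
  assumes "\<epsilon> > 0" "l2norm (\<lambda>z. \<sigma> (exx x) z y) \<ge> \<epsilon>"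
  shows "\<epsilon>^2 \<le> qv \<sigma> {x} y"
proof -
  have "l2norm (\<lambda>z. \<sigma> (exx x) z y) = sqrt (qv \<sigma> {x} y)"
    unfolding l2norm_def qv_def exx_proj ..
  then have "\<epsilon> \<le> sqrt (qv \<sigma> {x} y)" using assms by simp
  then have "\<epsilon>^2 \<le> (sqrt (qv \<sigma> {x} y))^2" by (rule power_mono) (use assms in simp)
  then show ?thesis using real_sqrt_pow2[OF qv_nonneg[of \<sigma> "{x}" y]] by simp
qed

lemma qv_unitary:
  assumes aut: "uroe_automorphism \<sigma>" and e: "\<sigma> (proj A) = mmul (mmul u (proj A)) (madj u)"
  shows "qv \<sigma> (A::'a::metric_space set) y = infsum (\<lambda>w. if w \<in> A then (cmod (u y w))^2 else 0) UNIV"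
proof -
  have m1: "mmul u (proj A) x w = (if w \<in> A then u x w else 0)" for x w
    unfolding mmul_def by (subst infsum_single[where a = w]) (auto simp: proj_def)
  have pw: "mmul u (proj A) y w * madj u w y = complex_of_real (if w \<in> A then (cmod (u y w))^2 else 0)" for w
    unfolding m1 madj_def using cnj_mult_self[of "u y w"] by (auto simp: mult.commute)
  have "complex_of_real (qv \<sigma> A y) = \<sigma> (proj A) y y" by (rule diag_qv[OF aut, symmetric])
  also have "\<dots> = infsum (\<lambda>w. mmul u (proj A) y w * madj u w y) UNIV"
    unfolding e by (simp add: mmul_def)
  also have "\<dots> = infsum (\<lambda>w. complex_of_real (if w \<in> A then (cmod (u y w))^2 else 0)) UNIV"
    by (simp only: pw)
  also have "\<dots> = complex_of_real (infsum (\<lambda>w. if w \<in> A then (cmod (u y w))^2 else 0) UNIV)"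
    by (rule infsum_of_real_c)
  finally show ?thesis using of_real_eq_iff by blast
qed

lemma fiber_finite:
  assumes aut: "uroe_automorphism \<sigma>" and e0: "\<epsilon> > 0"
    and eps: "\<And>x. \<epsilon>^2 \<le> qv \<sigma> {x} (f x)"
  shows "finite {x::'a::metric_space. f x = p}"
proof (rule ccontr)
  assume inf: "infinite {x. f x = p}"
  define n where "n = nat \<lceil>1 / \<epsilon>^2\<rceil> + 1"
  obtain F where F: "finite F" "card F = n" "F \<subseteq> {x. f x = p}"
    using infinite_arbitrarily_large[OF inf] by blast
  have "(\<Sum>x\<in>F. \<epsilon>^2) \<le> (\<Sum>x\<in>F. qv \<sigma> {x} p)"
    by (rule sum_mono) (use F(3) eps in force)
  also have "\<dots> \<le> qv \<sigma> F p" by (rule qv_sum[OF aut F(1)])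
  also have "\<dots> \<le> 1" by (rule qv_le1[OF aut])
  finally have "real n * \<epsilon>^2 \<le> 1" using F(2) by simp
  moreover have "1 / \<epsilon>^2 < real n" unfolding n_def by linarith
  then have "1 < real n * \<epsilon>^2" using e0 by (simp add: field_simps)
  ultimately show False by simp
qed



definition goodp :: "('a::metric_space \<Rightarrow> 'a) \<Rightarrow> nat \<Rightarrow> 'a set \<Rightarrow> 'a \<Rightarrow> bool" where
  "goodp f n P x \<longleftrightarrow> real n < dist x (f x) \<and> (\<forall>m\<in>P. real n < dist (f m) x \<and> real n < dist m (f x))"

definition pk :: "('a::metric_space \<Rightarrow> 'a) \<Rightarrow> nat \<Rightarrow> 'a set \<Rightarrow> 'a" where
  "pk f n P = (SOME x. goodp f n P x)"

primrec Prs :: "('a::metric_space \<Rightarrow> 'a) \<Rightarrow> nat \<Rightarrow> 'a set" where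
  "Prs f 0 = {}"
| "Prs f (Suc n) = insert (pk f n (Prs f n)) (Prs f n)"

lemma Prs_finite: "finite (Prs f n)"
  by (induction n) auto

lemma goodp_ex:
  fixes f :: "'a::metric_space \<Rightarrow> 'a"
  assumes unb: "\<And>C. \<exists>x. C < dist x (f x)"
    and fib: "\<And>p. finite {x. f x = p}"
    and cb: "\<And>(x::'a) r. finite (cball x r)"
    and fP: "finite P"
  shows "\<exists>x. goodp f n P x"
proof -
  define Sn where "Sn = {x. real n < dist x (f x)}"
  have inf: "infinite Sn"
  proof
    assume fin: "finite Sn"
    define M where "M = Max ((\<lambda>x. dist x (f x)) ` Sn)"
    have M: "dist x (f x) \<le> M" if "x \<in> Sn" for x
      unfolding M_def by (rule Max_ge) (use fin that in auto)
    obtain x where x: "max M (real n) < dist x (f x)" using unb by blast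
    then have "x \<in> Sn" unfolding Sn_def by simp
    then have "dist x (f x) \<le> M" by (rule M)
    with x show False by simp
  qed
  define E1 where "E1 = (\<Union>m\<in>P. cball (f m) (real n))"
  define E2 where "E2 = (\<Union>p\<in>(\<Union>m\<in>P. cball m (real n)). {x. f x = p})"
  have fE: "finite (E1 \<union> E2)" unfolding E1_def E2_def
    by (intro finite_UnI finite_UN_I fP cb fib)
  have "infinite (Sn - (E1 \<union> E2))" using inf fE by (rule Diff_infinite_finite[rotated])
  then have "Sn - (E1 \<union> E2) \<noteq> {}" by (rule infinite_imp_nonempty)
  then obtain x where x0: "x \<in> Sn - (E1 \<union> E2)" by blast
  then have x: "x \<in> Sn" "x \<notin> E1" "x \<notin> E2" by auto
  have "goodp f n P x"
    unfolding goodp_def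
  proof (intro conjI ballI)
    show "real n < dist x (f x)" using x(1) unfolding Sn_def by simp
    fix m assume mP: "m \<in> P"
    show "real n < dist (f m) x" using x(2) mP unfolding E1_def by (auto simp: not_le)
    show "real n < dist m (f x)" using x(3) mP unfolding E2_def by (auto simp: not_le)
  qed
  then show ?thesis by blast
qed

lemma sep_set:
  fixes f :: "'a::metric_space \<Rightarrow> 'a"
  assumes unb: "\<And>C. \<exists>x. C < dist x (f x)"
    and fib: "\<And>p. finite {x. f x = p}"
    and cb: "\<And>(x::'a) r. finite (cball x r)"
  shows "\<exists>A. \<forall>r. \<exists>x\<in>A. \<forall>w\<in>A. r < dist (f x) w"
proof -
  define xs where "xs = (\<lambda>n. pk f n (Prs f n))"
  have g: "goodp f n (Prs f n) (xs n)" for n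
    unfolding xs_def pk_def by (rule someI_ex[OF goodp_ex[OF unb fib cb Prs_finite]])
  have mem: "m < n \<Longrightarrow> xs m \<in> Prs f n" for m n
  proof (induction n)
    case 0 then show ?case by simp
  next
    case (Suc n)
    then show ?case by (cases "m = n") (auto simp: xs_def)
  qed
  show ?thesis
  proof (intro exI allI)
    fix r :: real
    define n where "n = nat \<lceil>r\<rceil> + 1"
    have rn: "r < real n" unfolding n_def by linarith
    show "\<exists>x\<in>range xs. \<forall>w\<in>range xs. r < dist (f x) w"
    proof (intro bexI ballI)
      show "xs n \<in> range xs" by simp
      fix w assume "w \<in> range xs"
      then obtain m where w: "w = xs m" by blast
      consider "m = n" | "m < n" | "n < m" by linarith
      then show "r < dist (f (xs n)) w"
      proof cases
        case 1 then show ?thesis using g[of n] rn w unfolding goodp_def by (simp add: dist_commute)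
      next
        case 2
        then have "real n < dist (xs m) (f (xs n))" using g[of n] mem[OF 2] unfolding goodp_def by blast
        then show ?thesis using rn w by (simp add: dist_commute)
      next
        case 3
        then have "real m < dist (f (xs n)) (xs m)" using g[of m] mem[OF 3] unfolding goodp_def by blast
        then show ?thesis using rn w 3 by simp
      qed
    qed
  qed
qed

lemma cball_finite:
  assumes "unif_locally_finite TYPE('a::metric_space)"
  shows "finite (cball (x::'a) r)"
proof -
  have "0 < max r 1" by simp
  then obtain N where "\<And>y::'a. finite (cball y (max r 1)) \<and> card (cball y (max r 1)) \<le> N"
    using ulfD[OF assms] by blast
  then have "finite (cball x (max r 1))" by blast
  moreover have "cball x r \<subseteq> cball x (max r 1)" by auto
  ultimately show ?thesis by (rule finite_subset[rotated])
qed

theorem proposition6p1p9: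
  fixes \<sigma> :: "('a::metric_space) mat \<Rightarrow> 'a mat" and f :: "'a \<Rightarrow> 'a"
  assumes "unif_locally_finite TYPE('a)"
    and "uroe_automorphism \<sigma>"
    and "\<exists>\<epsilon>>0. \<forall>x. l2norm (\<lambda>z. \<sigma> (exx x) z (f x)) \<ge> \<epsilon>"
    and "\<forall>A. \<exists>u\<in>uroe. unitary u \<and> \<sigma> (proj A) = mmul (mmul u (proj A)) (madj u)"
  shows "\<exists>C. \<forall>x. dist x (f x) \<le> C"
proof (rule ccontr)
  assume nb: "\<not> (\<exists>C. \<forall>x. dist x (f x) \<le> C)"
  have unb: "\<exists>x. C < dist x (f x)" for C using nb by (meson not_le)
  note ulf = assms(1) and aut = assms(2)
  obtain \<epsilon> where e0: "\<epsilon> > 0" and e: "\<And>x. l2norm (\<lambda>z. \<sigma> (exx x) z (f x)) \<ge> \<epsilon>"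
    using assms(3) by blast
  have eps: "\<epsilon>^2 \<le> qv \<sigma> {x} (f x)" for x by (rule qv_eps[where \<sigma>=\<sigma> and x=x and y="f x", OF e0 e[of x]])
  have fib: "finite {x. f x = p}" for p by (rule fiber_finite[OF aut e0 eps])
  obtain A where A: "\<And>r. \<exists>x\<in>A. \<forall>w\<in>A. r < dist (f x) w"
    using sep_set[OF unb fib cball_finite[OF ulf]] by blast
  obtain u where u: "u \<in> uroe" and ue: "\<sigma> (proj A) = mmul (mmul u (proj A)) (madj u)"
    using assms(4) by blast
  have RU: "RowT u" using uroe_Good[OF ulf u] unfolding Good_def by blast
  have e2: "\<epsilon>^2 / 2 > 0" using e0 by simp
  obtain r where r: "\<And>x Y. finite Y \<Longrightarrow> (\<forall>y\<in>Y. r < dist x y) \<Longrightarrow> n2 Y (u x) \<le> \<epsilon>^2 / 2"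
    using RowTD[OF RU e2] by blast
  obtain x where xA: "x \<in> A" and far: "\<forall>w\<in>A. r < dist (f x) w" using A by blast
  have "qv \<sigma> A (f x) = infsum (\<lambda>w. if w \<in> A then (cmod (u (f x) w))^2 else 0) UNIV"
    by (rule qv_unitary[OF aut ue])
  also have "\<dots> \<le> \<epsilon>^2 / 2"
  proof -
    have "sum (\<lambda>w. if w \<in> A then (cmod (u (f x) w))^2 else 0) F \<le> \<epsilon>^2 / 2" if fF: "finite F" for F
    proof -
      have "sum (\<lambda>w. if w \<in> A then (cmod (u (f x) w))^2 else 0) F = n2 {w\<in>F. w \<in> A} (u (f x))"
        unfolding n2_def using fF by (simp add: sum.inter_filter)
      also have "\<dots> \<le> \<epsilon>^2 / 2" by (rule r) (use fF far in auto)
      finally show ?thesis .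
    qed
    then show ?thesis using nonneg_fin_bound[of "\<lambda>w. if w \<in> A then (cmod (u (f x) w))^2 else 0" "\<epsilon>^2/2"] by auto
  qed
  finally have "qv \<sigma> A (f x) \<le> \<epsilon>^2 / 2" .
  moreover have "\<epsilon>^2 \<le> qv \<sigma> A (f x)" using eps[of x] qv_ge1[OF aut xA, of "f x"] by linarith
  ultimately show False using e2 by linarith
qed

end
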